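(* Let $\mathbb{X}$ be a Cartesian closed $k$-differential category and $C$ an object of $\mathbb{X}$. Then the reader monad $\mathbb{R}(C)=([C,-],\mu^C,\eta^C)$ is a Cartesian $k$-differential monad on $\mathbb{X}$, where $[C,-](A)=[C,A]$, $[C,f]=\lambda(f\circ\mathrm{ev}_{C,A})$ for $f:A\to B$, $\eta^C_A=\lambda(\pi_2):A\to[C,A]$ (with $\pi_2:C\times A\to A$), and $\mu^C_A=\lambda(\mathrm{ev}_{C,A}\circ\langle\pi_1,\mathrm{ev}_{C,[C,A]}\rangle):[C,[C,A]]\to[C,A]$. (In term notation: $[C,f](g)=\lambda x.f(g(x))$, $\mu^C_A(F)=\lambda x.F(x)(x)$, $\eta^C_A(a)=\lambda x.a$.)
   Context: Fix a commutative semiring $k$. A left $k$-linear category is a category $\mathbb{X}$ in which each hom-set $\mathbb{X}(A,B)$ is a $k$-module (scalar multiplication $r\cdot f$, addition $+$, zero $0$) such that precomposition is $k$-linear: $(r\cdot f+s\cdot g)\circ x=r\cdot(f\circ x)+s\cdot(g\circ x)$. A map $f$ is $k$-linear if $f\circ(r\cdot x+s\cdot y)=r\cdot(f\circ x)+s\cdot(f\circ y)$ for all suitable $x,y$ and $r,s\in k$. A Cartesian left $k$-linear category is a left $k$-linear category with finite products (terminal object $\ast$, projections $\pi_j:A_1\times\cdots\times A_n\to A_j$, pairing $\langle-,\dots,-\rangle$) in which all projections are $k$-linear. A Cartesian $k$-differential category is a Cartesian left $k$-linear category equipped with a differential combinator $\mathsf{D}$ assigning to each $f:A\to B$ a map $\mathsf{D}[f]:A\times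 A\to B$ such that: [CD.1] $\mathsf{D}[r\cdot f+s\cdot g]=r\cdot\mathsf{D}[f]+s\cdot\mathsf{D}[g]$; [CD.2] $\mathsf{D}[f]\circ\langle\pi_1,r\cdot\pi_2+s\cdot\pi_3\rangle=r\cdot(\mathsf{D}[f]\circ\langle\pi_1,\pi_2\rangle)+s\cdot(\mathsf{D}[f]\circ\langle\pi_1,\pi_3\rangle)$ (as maps $A\times A\times A\to B$); [CD.3] $\mathsf{D}[1_A]=\pi_2$ and, for $\pi_j:A_1\times\cdots\times A_n\to A_j$, $\mathsf{D}[\pi_j]=\pi_{n+j}$; [CD.4] $\mathsf{D}[\langle f_1,\dots,f_n\rangle]=\langle\mathsf{D}[f_1],\dots,\mathsf{D}[f_n]\rangle$; [CD.5] $\mathsf{D}[g\circ f]=\mathsf{D}[g]\circ\langle f\circ\pi_1,\mathsf{D}[f]\rangle$; [CD.6] $\mathsf{D}[\mathsf{D}[f]]\circ\langle\pi_1,0,0,\pi_2\rangle=\mathsf{D}[f]$; [CD.7] $\mathsf{D}[\mathsf{D}[f]]\circ\langle\pi_1,\pi_2,\pi_3,\pi_4\rangle=\mathsf{D}[\mathsf{D}[f]]\circ\langle\pi_1,\pi_3,\pi_2,\pi_4\rangle$ (identifying $(A\times A)\times(A\times A)$ with $A\times A\times A\times A$). A map $f$ is $\mathsf{D}$-linear if $\mathsf{D}[f]=f\circ\pi_2$. For Cartesian left $k$-linear categories $\mathbb{X},\mathbb{Y}$, a strong Cartesian $k$-linear functor is a functor $\mathsf{F}:\mathbb{X}\to\mathbb{Y}$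 such that $\mathsf{F}(\ast)\to\ast$ is an isomorphism, the canonical maps $\omega_{A_1,\dots,A_n}=\langle\mathsf{F}(\pi_1),\dots,\mathsf{F}(\pi_n)\rangle:\mathsf{F}(A_1\times\cdots\times A_n)\to\mathsf{F}(A_1)\times\cdots\times\mathsf{F}(A_n)$ are isomorphisms, and $\mathsf{F}(r\cdot f+s\cdot g)=r\cdot\mathsf{F}(f)+s\cdot\mathsf{F}(g)$. For Cartesian $k$-differential categories, a strong Cartesian $k$-differential functor is a strong Cartesian $k$-linear functor with $\mathsf{D}[\mathsf{F}(f)]=\mathsf{F}(\mathsf{D}[f])\circ\omega^{-1}_{A,A}$ for all $f:A\to B$. A Cartesian $k$-differential monad on a Cartesian $k$-differential category $\mathbb{X}$ is a monad $\mathbb{S}=(\mathsf{S},\mu,\eta)$ on $\mathbb{X}$ such that $\mathsf{S}$ is a strong Cartesian $k$-differential functor and every $\eta_A$ and $\mu_A$ is $\mathsf{D}$-linear. A Cartesian closed $k$-differential category is a Cartesian $k$-differential category $\mathbb{X}$ which is Cartesian closed, with internal hom $[C,B]$, evaluation $\mathrm{ev}_{C,B}:C\times[C,B]\to B$ and currying bijection $\lambda:\mathbb{X}(C\times A,B)\to\mathbb{X}(A,[C,B])$, such that currying is compatible with the $k$-linear structure ($\lambda(r\cdot f+s\cdot g)=r\cdot\lambda(f)+s\cdot\lambda(g)$) and with the differential combinator: for $f:C\times A\to B$, $\mathsf{D}[\lambda(f)]=\lambda\big(\mathsf{D}[f]\circ\langle\langle\pi_1,\pi_2\rangle,\langle 0,\pi_3\rangle\rangle\big)$,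 where the right-hand side curries the map $C\times A\times A\to B$, $(c,a,b)\mapsto\mathsf{D}[f]((c,a),(0,b))$ (the partial derivative of $f$ in its second argument). In term notation: $\frac{\mathsf{d}\,\lambda y.f(y,x)}{\mathsf{d}x}(a)\cdot b=\lambda y.\frac{\mathsf{d}f(y,x)}{\mathsf{d}x}(a)\cdot b$. *)

theory Defs
  imports Main
begin

text \<open>A category whose objects are the elements of type 'o and whose arrows are
the elements of type 'm, with domain dm, codomain cd, composition cmp g f
(meaning g after f) and identities idm.\<close>

locale category =
  fixes dm :: "'m \<Rightarrow> 'o" and cd :: "'m \<Rightarrow> 'o"
    and cmp :: "'m \<Rightarrow> 'm \<Rightarrow> 'm" and idm :: "'o \<Rightarrow> 'm"
  assumes id_dm: "dm (idm A) = A" and id_cd: "cd (idm A) = A"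
    and cmp_dm: "cd f = dm g \<Longrightarrow> dm (cmp g f) = dm f"
    and cmp_cd: "cd f = dm g \<Longrightarrow> cd (cmp g f) = cd g"
    and id_left: "cmp (idm (cd f)) f = f"
    and id_right: "cmp f (idm (dm f)) = f"
    and cmp_assoc: "\<lbrakk>cd f = dm g; cd g = dm h\<rbrakk> \<Longrightarrow> cmp h (cmp g f) = cmp (cmp h g) f"

definition hom :: "('m \<Rightarrow> 'o) \<Rightarrow> ('m \<Rightarrow> 'o) \<Rightarrow> 'o \<Rightarrow> 'o \<Rightarrow> 'm set" where
  "hom dm cd A B = {f. dm f = A \<and> cd f = B}"

definition is_iso :: "('m \<Rightarrow> 'o) \<Rightarrow> ('m \<Rightarrow> 'o) \<Rightarrow> ('m \<Rightarrow> 'm \<Rightarrow> 'm) \<Rightarrow> ('o \<Rightarrow> 'm) \<Rightarrow> 'm \<Rightarrow> bool" where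
  "is_iso dm cd cmp idm f \<longleftrightarrow> (\<exists>g. g \<in> hom dm cd (cd f) (dm f) \<and>
      cmp g f = idm (dm f) \<and> cmp f g = idm (cd f))"

definition arr_inv :: "('m \<Rightarrow> 'o) \<Rightarrow> ('m \<Rightarrow> 'o) \<Rightarrow> ('m \<Rightarrow> 'm \<Rightarrow> 'm) \<Rightarrow> ('o \<Rightarrow> 'm) \<Rightarrow> 'm \<Rightarrow> 'm" where
  "arr_inv dm cd cmp idm f = (SOME g. g \<in> hom dm cd (cd f) (dm f) \<and>
      cmp g f = idm (dm f) \<and> cmp f g = idm (cd f))"

locale left_k_linear_category = category dm cd cmp idm
  for dm :: "'m \<Rightarrow> 'o" and cd :: "'m \<Rightarrow> 'o"
    and cmp :: "'m \<Rightarrow> 'm \<Rightarrow> 'm" and idm :: "'o \<Rightarrow> 'm" +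
  fixes add :: "'m \<Rightarrow> 'm \<Rightarrow> 'm"
    and smult :: "'k::comm_semiring_1 \<Rightarrow> 'm \<Rightarrow> 'm"
    and zro :: "'o \<Rightarrow> 'o \<Rightarrow> 'm"
  assumes add_hom: "\<lbrakk>f \<in> hom dm cd A B; g \<in> hom dm cd A B\<rbrakk> \<Longrightarrow> add f g \<in> hom dm cd A B"
    and smult_hom: "f \<in> hom dm cd A B \<Longrightarrow> smult r f \<in> hom dm cd A B"
    and zro_hom: "zro A B \<in> hom dm cd A B"
    and add_assoc: "\<lbrakk>f \<in> hom dm cd A B; g \<in> hom dm cd A B; h \<in> hom dm cd A B\<rbrakk>
        \<Longrightarrow> add (add f g) h = add f (add g h)"
    and add_comm: "\<lbrakk>f \<in> hom dm cd A B; g \<in> hom dm cd A B\<rbrakk> \<Longrightarrow> add f g = add g f"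
    and add_zro: "f \<in> hom dm cd A B \<Longrightarrow> add f (zro A B) = f"
    and smult_add_right: "\<lbrakk>f \<in> hom dm cd A B; g \<in> hom dm cd A B\<rbrakk>
        \<Longrightarrow> smult r (add f g) = add (smult r f) (smult r g)"
    and smult_add_left: "f \<in> hom dm cd A B \<Longrightarrow> smult (r + s) f = add (smult r f) (smult s f)"
    and smult_mult: "f \<in> hom dm cd A B \<Longrightarrow> smult (r * s) f = smult r (smult s f)"
    and smult_one: "f \<in> hom dm cd A B \<Longrightarrow> smult 1 f = f"
    and smult_zero_left: "f \<in> hom dm cd A B \<Longrightarrow> smult 0 f = zro A B"
    and smult_zero_right: "smult r (zro A B) = zro A B"
    and precomp_linear: "\<lbrakk>x \<in> hom dm cd A B; f \<in> hom dm cd B C; g \<in> hom dm cd B C\<rbrakk>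
        \<Longrightarrow> cmp (add (smult r f) (smult s g)) x = add (smult r (cmp f x)) (smult s (cmp g x))"
begin

definition k_linear :: "'m \<Rightarrow> bool" where
  "k_linear f \<longleftrightarrow> (\<forall>X x y r s. x \<in> hom dm cd X (dm f) \<longrightarrow> y \<in> hom dm cd X (dm f) \<longrightarrow>
     cmp f (add (smult r x) (smult s y)) = add (smult r (cmp f x)) (smult s (cmp f y)))"

end

locale cartesian_left_k_linear_category = left_k_linear_category dm cd cmp idm add smult zro
  for dm :: "'m \<Rightarrow> 'o" and cd :: "'m \<Rightarrow> 'o"
    and cmp :: "'m \<Rightarrow> 'm \<Rightarrow> 'm" and idm :: "'o \<Rightarrow> 'm"
    and add :: "'m \<Rightarrow> 'm \<Rightarrow> 'm"
    and smult :: "'k::comm_semiring_1 \<Rightarrow> 'm \<Rightarrow> 'm"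
    and zro :: "'o \<Rightarrow> 'o \<Rightarrow> 'm" +
  fixes prod :: "'o \<Rightarrow> 'o \<Rightarrow> 'o"
    and p1 :: "'o \<Rightarrow> 'o \<Rightarrow> 'm" and p2 :: "'o \<Rightarrow> 'o \<Rightarrow> 'm"
    and pair :: "'m \<Rightarrow> 'm \<Rightarrow> 'm"
    and T :: "'o" and bang :: "'o \<Rightarrow> 'm"
  assumes p1_hom: "p1 A B \<in> hom dm cd (prod A B) A"
    and p2_hom: "p2 A B \<in> hom dm cd (prod A B) B"
    and pair_hom: "\<lbrakk>f \<in> hom dm cd X A; g \<in> hom dm cd X B\<rbrakk> \<Longrightarrow> pair f g \<in> hom dm cd X (prod A B)"
    and p1_pair: "\<lbrakk>f \<in> hom dm cd X A; g \<in> hom dm cd X B\<rbrakk> \<Longrightarrow> cmp (p1 A B) (pair f g) = f"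
    and p2_pair: "\<lbrakk>f \<in> hom dm cd X A; g \<in> hom dm cd X B\<rbrakk> \<Longrightarrow> cmp (p2 A B) (pair f g) = g"
    and pair_unique: "h \<in> hom dm cd X (prod A B) \<Longrightarrow> pair (cmp (p1 A B) h) (cmp (p2 A B) h) = h"
    and bang_hom: "bang A \<in> hom dm cd A T"
    and bang_unique: "f \<in> hom dm cd A T \<Longrightarrow> f = bang A"
    and p1_linear: "k_linear (p1 A B)"
    and p2_linear: "k_linear (p2 A B)"

locale cartesian_k_differential_category =
  cartesian_left_k_linear_category dm cd cmp idm add smult zro prod p1 p2 pair T bang
  for dm :: "'m \<Rightarrow> 'o" and cd :: "'m \<Rightarrow> 'o"
    and cmp :: "'m \<Rightarrow> 'm \<Rightarrow> 'm" and idm :: "'o \<Rightarrow> 'm"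
    and add :: "'m \<Rightarrow> 'm \<Rightarrow> 'm"
    and smult :: "'k::comm_semiring_1 \<Rightarrow> 'm \<Rightarrow> 'm"
    and zro :: "'o \<Rightarrow> 'o \<Rightarrow> 'm"
    and prod :: "'o \<Rightarrow> 'o \<Rightarrow> 'o"
    and p1 :: "'o \<Rightarrow> 'o \<Rightarrow> 'm" and p2 :: "'o \<Rightarrow> 'o \<Rightarrow> 'm"
    and pair :: "'m \<Rightarrow> 'm \<Rightarrow> 'm"
    and T :: "'o" and bang :: "'o \<Rightarrow> 'm" +
  fixes D :: "'m \<Rightarrow> 'm"
  assumes D_hom: "f \<in> hom dm cd A B \<Longrightarrow> D f \<in> hom dm cd (prod A A) B"
    and CD1: "\<lbrakk>f \<in> hom dm cd A B; g \<in> hom dm cd A B\<rbrakk>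
        \<Longrightarrow> D (add (smult r f) (smult s g)) = add (smult r (D f)) (smult s (D g))"
    and CD2: "f \<in> hom dm cd A B \<Longrightarrow>
        (let P = prod A (prod A A);
             q1 = p1 A (prod A A);
             q2 = cmp (p1 A A) (p2 A (prod A A));
             q3 = cmp (p2 A A) (p2 A (prod A A))
         in cmp (D f) (pair q1 (add (smult r q2) (smult s q3)))
            = add (smult r (cmp (D f) (pair q1 q2))) (smult s (cmp (D f) (pair q1 q3))))"
    and CD3_id: "D (idm A) = p2 A A"
    and CD3_p1: "D (p1 A B) = cmp (p1 A B) (p2 (prod A B) (prod A B))"
    and CD3_p2: "D (p2 A B) = cmp (p2 A B) (p2 (prod A B) (prod A B))"
    and CD4: "\<lbrakk>f \<in> hom dm cd X A; g \<in> hom dm cd X B\<rbrakk> \<Longrightarrow> D (pair f g) = pair (D f) (D g)"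
    and CD4_bang: "D (bang A) = bang (prod A A)"
    and CD5: "\<lbrakk>f \<in> hom dm cd A B; g \<in> hom dm cd B C\<rbrakk>
        \<Longrightarrow> D (cmp g f) = cmp (D g) (pair (cmp f (p1 A A)) (D f))"
    and CD6: "f \<in> hom dm cd A B \<Longrightarrow>
        cmp (D (D f)) (pair (pair (p1 A A) (zro (prod A A) A)) (pair (zro (prod A A) A) (p2 A A)))
          = D f"
    and CD7: "f \<in> hom dm cd A B \<Longrightarrow>
        (let Q = prod (prod A A) (prod A A);
             q1 = cmp (p1 A A) (p1 (prod A A) (prod A A));
             q2 = cmp (p2 A A) (p1 (prod A A) (prod A A));
             q3 = cmp (p1 A A) (p2 (prod A A) (prod A A));
             q4 = cmp (p2 A A) (p2 (prod A A) (prod A A))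
         in cmp (D (D f)) (pair (pair q1 q2) (pair q3 q4))
            = cmp (D (D f)) (pair (pair q1 q3) (pair q2 q4)))"
begin

definition D_linear :: "'m \<Rightarrow> bool" where
  "D_linear f \<longleftrightarrow> D f = cmp f (p2 (dm f) (dm f))"

end

locale cartesian_closed_k_differential_category =
  cartesian_k_differential_category dm cd cmp idm add smult zro prod p1 p2 pair T bang D
  for dm :: "'m \<Rightarrow> 'o" and cd :: "'m \<Rightarrow> 'o"
    and cmp :: "'m \<Rightarrow> 'm \<Rightarrow> 'm" and idm :: "'o \<Rightarrow> 'm"
    and add :: "'m \<Rightarrow> 'm \<Rightarrow> 'm"
    and smult :: "'k::comm_semiring_1 \<Rightarrow> 'm \<Rightarrow> 'm"
    and zro :: "'o \<Rightarrow> 'o \<Rightarrow> 'm"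
    and prod :: "'o \<Rightarrow> 'o \<Rightarrow> 'o"
    and p1 :: "'o \<Rightarrow> 'o \<Rightarrow> 'm" and p2 :: "'o \<Rightarrow> 'o \<Rightarrow> 'm"
    and pair :: "'m \<Rightarrow> 'm \<Rightarrow> 'm"
    and T :: "'o" and bang :: "'o \<Rightarrow> 'm"
    and D :: "'m \<Rightarrow> 'm" +
  fixes exp :: "'o \<Rightarrow> 'o \<Rightarrow> 'o"
    and ev :: "'o \<Rightarrow> 'o \<Rightarrow> 'm"
    and lam :: "'o \<Rightarrow> 'o \<Rightarrow> 'm \<Rightarrow> 'm"
  assumes ev_hom: "ev C B \<in> hom dm cd (prod C (exp C B)) B"
    and lam_hom: "f \<in> hom dm cd (prod C A) B \<Longrightarrow> lam C A f \<in> hom dm cd A (exp C B)"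
    and ev_lam: "f \<in> hom dm cd (prod C A) B \<Longrightarrow>
        cmp (ev C B) (pair (p1 C A) (cmp (lam C A f) (p2 C A))) = f"
    and lam_unique: "g \<in> hom dm cd A (exp C B) \<Longrightarrow>
        lam C A (cmp (ev C B) (pair (p1 C A) (cmp g (p2 C A)))) = g"
    and lam_linear: "\<lbrakk>f \<in> hom dm cd (prod C A) B; g \<in> hom dm cd (prod C A) B\<rbrakk> \<Longrightarrow>
        lam C A (add (smult r f) (smult s g)) = add (smult r (lam C A f)) (smult s (lam C A g))"
    and D_lam: "f \<in> hom dm cd (prod C A) B \<Longrightarrow>
        D (lam C A f) = lam C (prod A A)
          (cmp (D f) (pair (pair (p1 C (prod A A)) (cmp (p1 A A) (p2 C (prod A A))))
                           (pair (zro (prod C (prod A A)) C) (cmp (p2 A A) (p2 C (prod A A))))))"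

locale cartesian_k_differential_monad =
  cartesian_k_differential_category dm cd cmp idm add smult zro prod p1 p2 pair T bang D
  for dm :: "'m \<Rightarrow> 'o" and cd :: "'m \<Rightarrow> 'o"
    and cmp :: "'m \<Rightarrow> 'm \<Rightarrow> 'm" and idm :: "'o \<Rightarrow> 'm"
    and add :: "'m \<Rightarrow> 'm \<Rightarrow> 'm"
    and smult :: "'k::comm_semiring_1 \<Rightarrow> 'm \<Rightarrow> 'm"
    and zro :: "'o \<Rightarrow> 'o \<Rightarrow> 'm"
    and prod :: "'o \<Rightarrow> 'o \<Rightarrow> 'o"
    and p1 :: "'o \<Rightarrow> 'o \<Rightarrow> 'm" and p2 :: "'o \<Rightarrow> 'o \<Rightarrow> 'm"
    and pair :: "'m \<Rightarrow> 'm \<Rightarrow> 'm"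
    and T :: "'o" and bang :: "'o \<Rightarrow> 'm"
    and D :: "'m \<Rightarrow> 'm" +
  fixes S :: "'o \<Rightarrow> 'o" and Sm :: "'m \<Rightarrow> 'm"
    and mu :: "'o \<Rightarrow> 'm" and eta :: "'o \<Rightarrow> 'm"
  assumes S_hom: "f \<in> hom dm cd A B \<Longrightarrow> Sm f \<in> hom dm cd (S A) (S B)"
    and S_id: "Sm (idm A) = idm (S A)"
    and S_cmp: "\<lbrakk>f \<in> hom dm cd A B; g \<in> hom dm cd B C\<rbrakk> \<Longrightarrow> Sm (cmp g f) = cmp (Sm g) (Sm f)"
    and S_terminal: "is_iso dm cd cmp idm (bang (S T))"
    and S_omega: "is_iso dm cd cmp idm (pair (Sm (p1 A B)) (Sm (p2 A B)))"
    and S_linear: "\<lbrakk>f \<in> hom dm cd A B; g \<in> hom dm cd A B\<rbrakk>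
        \<Longrightarrow> Sm (add (smult r f) (smult s g)) = add (smult r (Sm f)) (smult s (Sm g))"
    and S_D: "f \<in> hom dm cd A B \<Longrightarrow>
        D (Sm f) = cmp (Sm (D f)) (arr_inv dm cd cmp idm (pair (Sm (p1 A A)) (Sm (p2 A A))))"
    and mu_hom: "mu A \<in> hom dm cd (S (S A)) (S A)"
    and eta_hom: "eta A \<in> hom dm cd A (S A)"
    and mu_nat: "f \<in> hom dm cd A B \<Longrightarrow> cmp (mu B) (Sm (Sm f)) = cmp (Sm f) (mu A)"
    and eta_nat: "f \<in> hom dm cd A B \<Longrightarrow> cmp (eta B) f = cmp (Sm f) (eta A)"
    and mu_assoc: "cmp (mu A) (Sm (mu A)) = cmp (mu A) (mu (S A))"
    and mu_eta_left: "cmp (mu A) (eta (S A)) = idm (S A)"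
    and mu_eta_right: "cmp (mu A) (Sm (eta A)) = idm (S A)"
    and eta_D_linear: "D_linear (eta A)"
    and mu_D_linear: "D_linear (mu A)"

end

theory Submission
  imports Defs
begin

context cartesian_closed_k_differential_category
begin

lemma hom_iff: "f \<in> hom dm cd A B \<longleftrightarrow> dm f = A \<and> cd f = B"
  by (simp add: hom_def)

lemma p1_dm[simp]: "dm (p1 A B) = prod A B" and p1_cd[simp]: "cd (p1 A B) = A"
  and p2_dm[simp]: "dm (p2 A B) = prod A B" and p2_cd[simp]: "cd (p2 A B) = B"
  using p1_hom p2_hom by (auto simp: hom_iff)

lemma ev_dm[simp]: "dm (ev C B) = prod C (exp C B)" and ev_cd[simp]: "cd (ev C B) = B"
  using ev_hom by (auto simp: hom_iff)

lemma zro_dm[simp]: "dm (zro A B) = A" and zro_cd[simp]: "cd (zro A B) = B"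
  using zro_hom by (auto simp: hom_iff)

lemma bang_dm[simp]: "dm (bang A) = A" and bang_cd[simp]: "cd (bang A) = T"
  using bang_hom by (auto simp: hom_iff)

lemma D_dm[simp]: "dm (D f) = prod (dm f) (dm f)" and D_cd[simp]: "cd (D f) = cd f"
  using D_hom[of f "dm f" "cd f"] by (auto simp: hom_iff)

lemma pair_dm[simp]: "dm g = dm f \<Longrightarrow> dm (pair f g) = dm f"
  and pair_cd[simp]: "dm g = dm f \<Longrightarrow> cd (pair f g) = prod (cd f) (cd g)"
  using pair_hom[of f "dm f" "cd f" g "cd g"] by (auto simp: hom_iff)

lemma lam_dm[simp]: "dm f = prod C A \<Longrightarrow> dm (lam C A f) = A"
  and lam_cd[simp]: "dm f = prod C A \<Longrightarrow> cd (lam C A f) = exp C (cd f)"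
  using lam_hom[of f C A "cd f"] by (auto simp: hom_iff)

lemma cmp_dm'[simp]: "cd f = dm g \<Longrightarrow> dm (cmp g f) = dm f" by (rule cmp_dm)
lemma cmp_cd'[simp]: "cd f = dm g \<Longrightarrow> cd (cmp g f) = cd g" by (rule cmp_cd)
declare id_dm[simp] id_cd[simp]

lemma assoc'[simp]: "cd f = dm g \<Longrightarrow> cd g = dm h \<Longrightarrow> cmp (cmp h g) f = cmp h (cmp g f)"
  by (simp add: cmp_assoc)

lemma idl[simp]: "cd f = A \<Longrightarrow> cmp (idm A) f = f" using id_left by blast
lemma idr[simp]: "dm f = A \<Longrightarrow> cmp f (idm A) = f" using id_right by blast

lemma p1_pair'[simp]: "cd f = A \<Longrightarrow> cd g = B \<Longrightarrow> dm g = dm f \<Longrightarrow> cmp (p1 A B) (pair f g) = f"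
  using p1_pair[of f "dm f" A g B] by (simp add: hom_iff)
lemma p2_pair'[simp]: "cd f = A \<Longrightarrow> cd g = B \<Longrightarrow> dm g = dm f \<Longrightarrow> cmp (p2 A B) (pair f g) = g"
  using p2_pair[of f "dm f" A g B] by (simp add: hom_iff)

lemma pair_eta[simp]: "cd h = prod A B \<Longrightarrow> pair (cmp (p1 A B) h) (cmp (p2 A B) h) = h"
  using pair_unique[of h "dm h" A B] by (simp add: hom_iff)

lemma pair_p1p2[simp]: "pair (p1 A B) (p2 A B) = idm (prod A B)"
  using pair_eta[of "idm (prod A B)" A B] by simp

lemma pair_cmp[simp]: "dm g = dm f \<Longrightarrow> cd h = dm f \<Longrightarrow> cmp (pair f g) h = pair (cmp f h) (cmp g h)"
proof -
  assume a: "dm g = dm f" "cd h = dm f"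
  have "pair (cmp (p1 (cd f) (cd g)) (cmp (pair f g) h)) (cmp (p2 (cd f) (cd g)) (cmp (pair f g) h)) = cmp (pair f g) h"
    using a by (intro pair_eta) simp
  moreover have "cmp (p1 (cd f) (cd g)) (cmp (pair f g) h) = cmp f h"
    using a assoc'[of h "pair f g" "p1 (cd f) (cd g)"] by simp
  moreover have "cmp (p2 (cd f) (cd g)) (cmp (pair f g) h) = cmp g h"
    using a assoc'[of h "pair f g" "p2 (cd f) (cd g)"] by simp
  ultimately show ?thesis by simp
qed

lemma zro_cmp[simp]: "cd x = A \<Longrightarrow> cmp (zro A B) x = zro (dm x) B"
proof -
  assume a: "cd x = A"
  have "cmp (add (smult 0 (zro A B)) (smult 0 (zro A B))) x
        = add (smult 0 (cmp (zro A B) x)) (smult 0 (cmp (zro A B) x))"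
    using a by (intro precomp_linear) (auto simp: hom_iff)
  moreover have "smult 0 (cmp (zro A B) x) = zro (dm x) B"
    using a by (intro smult_zero_left) (auto simp: hom_iff)
  moreover have "add (zro A B) (zro A B) = zro A B" using add_zro zro_hom by blast
  moreover have "add (zro (dm x) B) (zro (dm x) B) = zro (dm x) B" using add_zro zro_hom by blast
  ultimately show ?thesis by (simp add: smult_zero_right)
qed

lemma ev_lam_app[simp]:
  assumes "dm \<phi> = prod C Y" "cd \<phi> = B" "cd c = C" "cd x = Y" "dm x = dm c"
  shows "cmp (ev C B) (pair c (cmp (lam C Y \<phi>) x)) = cmp \<phi> (pair c x)"
proof -
  have "pair c (cmp (lam C Y \<phi>) x) = cmp (pair (p1 C Y) (cmp (lam C Y \<phi>) (p2 C Y))) (pair c x)"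
    using assms by simp
  hence "cmp (ev C B) (pair c (cmp (lam C Y \<phi>) x)) =
     cmp (cmp (ev C B) (pair (p1 C Y) (cmp (lam C Y \<phi>) (p2 C Y)))) (pair c x)"
    using assms by simp
  also have "\<dots> = cmp \<phi> (pair c x)" using ev_lam[of \<phi> C Y B] assms by (simp add: hom_iff)
  finally show ?thesis .
qed

lemma ev_lam_app0[simp]:
  assumes "dm \<phi> = prod C Y" "cd \<phi> = B" "cd c = C" "dm c = Y"
  shows "cmp (ev C B) (pair c (lam C Y \<phi>)) = cmp \<phi> (pair c (idm Y))"
  using ev_lam_app[of \<phi> C Y B c "idm Y"] assms by simp

lemma lam_ext:
  assumes "dm h = dm g" "cd g = exp C B" "cd h = exp C B"
    and "\<And>c x. cd c = C \<Longrightarrow> cd x = dm g \<Longrightarrow> dm x = dm c \<Longrightarrow>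
           cmp (ev C B) (pair c (cmp g x)) = cmp (ev C B) (pair c (cmp h x))"
  shows "g = h"
proof -
  have "lam C (dm g) (cmp (ev C B) (pair (p1 C (dm g)) (cmp g (p2 C (dm g))))) = g"
    using assms by (intro lam_unique) (simp add: hom_iff)
  moreover have "lam C (dm g) (cmp (ev C B) (pair (p1 C (dm g)) (cmp h (p2 C (dm g))))) = h"
    using assms lam_unique[of h "dm g" C B] by (simp add: hom_iff)
  moreover have "cmp (ev C B) (pair (p1 C (dm g)) (cmp g (p2 C (dm g)))) =
      cmp (ev C B) (pair (p1 C (dm g)) (cmp h (p2 C (dm g))))"
    using assms(4)[of "p1 C (dm g)" "p2 C (dm g)"] by simp
  ultimately show ?thesis by metis
qed

lemma prod_ext:
  assumes "dm h = dm k" "cd h = prod A B" "cd k = prod A B"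
    "cmp (p1 A B) h = cmp (p1 A B) k" "cmp (p2 A B) h = cmp (p2 A B) k"
  shows "h = k"
  using pair_eta[of h A B] pair_eta[of k A B] assms by metis

lemma arr_inv_unique:
  assumes "dm g = cd f" "cd g = dm f" "cmp g f = idm (dm f)" "cmp f g = idm (cd f)"
  shows "arr_inv dm cd cmp idm f = g"
proof -
  let ?P = "\<lambda>g. g \<in> hom dm cd (cd f) (dm f) \<and> cmp g f = idm (dm f) \<and> cmp f g = idm (cd f)"
  have "?P g" using assms by (simp add: hom_iff)
  hence P: "?P (arr_inv dm cd cmp idm f)" unfolding arr_inv_def by (rule someI)
  define g' where "g' = arr_inv dm cd cmp idm f"
  have h: "dm g' = cd f" "cd g' = dm f" "cmp g' f = idm (dm f)" using P by (auto simp: hom_iff g'_def)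
  have "g' = cmp g' (cmp f g)" using assms h by simp
  also have "\<dots> = cmp (cmp g' f) g" using assms h cmp_assoc[of g f g'] by simp
  also have "\<dots> = g" using assms h by (simp del: assoc')
  finally show ?thesis by (simp add: g'_def)
qed


declare CD3_id[simp] CD3_p1[simp] CD3_p2[simp] CD4_bang[simp]

lemma CD5'[simp]: "cd f = dm g \<Longrightarrow> D (cmp g f) = cmp (D g) (pair (cmp f (p1 (dm f) (dm f))) (D f))"
  using CD5[of f "dm f" "cd f" g "cd g"] by (simp add: hom_iff)

lemma CD4'[simp]: "dm g = dm f \<Longrightarrow> D (pair f g) = pair (D f) (D g)"
  using CD4[of f "dm f" "cd f" g "cd g"] by (simp add: hom_iff)

lemma D_lam'[simp]: "dm f = prod C A \<Longrightarrow>
        D (lam C A f) = lam C (prod A A)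
          (cmp (D f) (pair (pair (p1 C (prod A A)) (cmp (p1 A A) (p2 C (prod A A))))
                           (pair (zro (prod C (prod A A)) C) (cmp (p2 A A) (p2 C (prod A A))))))"
  using D_lam[of f C A "cd f"] by (simp add: hom_iff)

lemma lam_ev_id[simp]: "lam C (exp C B) (ev C B) = idm (exp C B)"
  using lam_unique[of "idm (exp C B)" "exp C B" C B] by (simp add: hom_iff)

lemma D_ev_lin[simp]:
  assumes "cd c = C" "cd g = exp C B" "cd h = exp C B" "dm g = dm c" "dm h = dm c"
  shows "cmp (D (ev C B)) (pair (pair c g) (pair (zro (dm c) C) h)) = cmp (ev C B) (pair c h)"
proof -
  let ?E = "exp C B"
  let ?\<psi> = "cmp (D (ev C B)) (pair (pair (p1 C (prod ?E ?E)) (cmp (p1 ?E ?E) (p2 C (prod ?E ?E))))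
                           (pair (zro (prod C (prod ?E ?E)) C) (cmp (p2 ?E ?E) (p2 C (prod ?E ?E)))))"
  have "D (lam C ?E (ev C B)) = lam C (prod ?E ?E) ?\<psi>" by (rule D_lam') simp
  hence 1: "p2 ?E ?E = lam C (prod ?E ?E) ?\<psi>" by (metis lam_ev_id CD3_id)
  have "cmp (ev C B) (pair (p1 C (prod ?E ?E)) (cmp (lam C (prod ?E ?E) ?\<psi>) (p2 C (prod ?E ?E)))) = ?\<psi>"
    by (rule ev_lam) (simp add: hom_iff)
  hence 2: "?\<psi> = cmp (ev C B) (pair (p1 C (prod ?E ?E)) (cmp (p2 ?E ?E) (p2 C (prod ?E ?E))))"
    using 1 by simp
  have "cmp ?\<psi> (pair c (pair g h)) = cmp (cmp (ev C B) (pair (p1 C (prod ?E ?E)) (cmp (p2 ?E ?E) (p2 C (prod ?E ?E))))) (pair c (pair g h))"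
    using 2 by simp
  thus ?thesis using assms by simp
qed

definition psi :: "'o \<Rightarrow> 'o \<Rightarrow> 'o \<Rightarrow> 'm" where
  "psi C A B = lam C (prod (exp C A) (exp C B))
     (pair (cmp (ev C A) (pair (p1 C (prod (exp C A) (exp C B))) (cmp (p1 (exp C A) (exp C B)) (p2 C (prod (exp C A) (exp C B))))))
           (cmp (ev C B) (pair (p1 C (prod (exp C A) (exp C B))) (cmp (p2 (exp C A) (exp C B)) (p2 C (prod (exp C A) (exp C B)))))))"

lemma psi_dm[simp]: "dm (psi C A B) = prod (exp C A) (exp C B)"
  and psi_cd[simp]: "cd (psi C A B) = exp C (prod A B)"
  by (simp_all add: psi_def)

lemma omega_psi: "cmp (pair (lam C (exp C (prod A B)) (cmp (p1 A B) (ev C (prod A B))))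
                               (lam C (exp C (prod A B)) (cmp (p2 A B) (ev C (prod A B))))) (psi C A B)
    = idm (prod (exp C A) (exp C B))"
proof (rule prod_ext[where A="exp C A" and B="exp C B"], simp_all)
  show "cmp (lam C (exp C (prod A B)) (cmp (p1 A B) (ev C (prod A B)))) (psi C A B) = p1 (exp C A) (exp C B)"
    by (rule lam_ext[where C=C and B=A]) (auto simp: psi_def)
  show "cmp (lam C (exp C (prod A B)) (cmp (p2 A B) (ev C (prod A B)))) (psi C A B) = p2 (exp C A) (exp C B)"
    by (rule lam_ext[where C=C and B=B]) (auto simp: psi_def)
qed

lemma psi_omega: "cmp (psi C A B) (pair (lam C (exp C (prod A B)) (cmp (p1 A B) (ev C (prod A B))))
                               (lam C (exp C (prod A B)) (cmp (p2 A B) (ev C (prod A B)))))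
    = idm (exp C (prod A B))"
  by (rule lam_ext[where C=C and B="prod A B"]) (auto simp: psi_def)

lemma arr_inv_omega: "arr_inv dm cd cmp idm (pair (lam C (exp C (prod A B)) (cmp (p1 A B) (ev C (prod A B))))
                               (lam C (exp C (prod A B)) (cmp (p2 A B) (ev C (prod A B))))) = psi C A B"
  by (rule arr_inv_unique) (simp_all add: omega_psi psi_omega)

lemma monad: "cartesian_k_differential_monad dm cd cmp idm add smult zro prod p1 p2 pair T bang D
           (\<lambda>A. exp C A)
           (\<lambda>f. lam C (exp C (dm f)) (cmp f (ev C (dm f))))
           (\<lambda>A. lam C (exp C (exp C A))
                  (cmp (ev C A) (pair (p1 C (exp C (exp C A))) (ev C (exp C A)))))
           (\<lambda>A. lam C A (p2 C A))"
proof (unfold_locales, goal_cases)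
  case (1 f A B) then show ?case by (simp add: hom_iff)
next
  case (2 A) then show ?case by - (rule lam_ext[where C=C and B=A], auto)
next
  case (3 f A B g C') then show ?case by - (rule lam_ext[where C=C and B=C'], auto simp: hom_iff)
next
  case 4
  let ?g = "lam C T (bang (prod C T))"
  have a: "cmp (bang (exp C T)) ?g = idm T"
    using bang_unique[of "cmp (bang (exp C T)) ?g" T] bang_unique[of "idm T" T] by (simp add: hom_iff)
  have b: "cmp ?g (bang (exp C T)) = idm (exp C T)"
  proof (rule lam_ext[where C=C and B=T])
    fix c x assume h: "cd c = C" "cd x = dm (cmp ?g (bang (exp C T)))" "dm x = dm c"
    have "cmp (ev C T) (pair c (cmp (cmp ?g (bang (exp C T))) x)) \<in> hom dm cd (dm c) T"
      using h by (simp add: hom_iff)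
    moreover have "cmp (ev C T) (pair c (cmp (idm (exp C T)) x)) \<in> hom dm cd (dm c) T"
      using h by (simp add: hom_iff)
    ultimately show "cmp (ev C T) (pair c (cmp (cmp ?g (bang (exp C T))) x)) =
        cmp (ev C T) (pair c (cmp (idm (exp C T)) x))" using bang_unique by metis
  qed simp_all
  show ?case unfolding is_iso_def using a b by (intro exI[of _ ?g]) (simp add: hom_iff)
next
  case (5 A B) show ?case unfolding is_iso_def
    by (intro exI[of _ "psi C A B"]) (simp add: hom_iff omega_psi psi_omega)
next
  case (6 f A B g r s)
  have "cmp (add (smult r f) (smult s g)) (ev C A) = add (smult r (cmp f (ev C A))) (smult s (cmp g (ev C A)))"
    using 6 by (intro precomp_linear) (simp_all add: hom_iff)
  moreover have "dm (add (smult r f) (smult s g)) = A" using 6 add_hom smult_hom by (simp add: hom_iff)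
  ultimately show ?case using 6 by (simp add: hom_iff lam_linear)
next
  case (7 f A B)
  then show ?case by - (simp add: hom_iff arr_inv_omega, rule lam_ext[where C=C and B=B], auto simp: psi_def)
next
  case (8 A) then show ?case by (simp add: hom_iff)
next
  case (9 A) then show ?case by (simp add: hom_iff)
next
  case (10 f A B) then show ?case by - (rule lam_ext[where C=C and B=B], auto simp: hom_iff)
next
  case (11 f A B) then show ?case by - (rule lam_ext[where C=C and B=B], auto simp: hom_iff)
next
  case (12 A) then show ?case by - (rule lam_ext[where C=C and B=A], auto)
next
  case (13 A) then show ?case by - (rule lam_ext[where C=C and B=A], auto)
next
  case (14 A) then show ?case by - (rule lam_ext[where C=C and B=A], auto)
next
  case (15 A) then show ?case unfolding D_linear_def by - (rule lam_ext[where C=C and B=A], auto)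
next
  case (16 A) then show ?case unfolding D_linear_def by - (rule lam_ext[where C=C and B=A], auto)
qed

end

theorem mainTheorem4:
  fixes smult :: "'k::comm_semiring_1 \<Rightarrow> 'm \<Rightarrow> 'm"
    and C :: "'o"
    and prd :: "'o \<Rightarrow> 'o \<Rightarrow> 'o"
    and ex :: "'o \<Rightarrow> 'o \<Rightarrow> 'o"
  assumes "cartesian_closed_k_differential_category dm cd cmp idm add smult zro
             prd p1 p2 pair T bang D ex ev lam"
  shows "cartesian_k_differential_monad dm cd cmp idm add smult zro prd p1 p2 pair T bang D
           (\<lambda>A. ex C A)
           (\<lambda>f. lam C (ex C (dm f)) (cmp f (ev C (dm f))))
           (\<lambda>A. lam C (ex C (ex C A))
                  (cmp (ev C A) (pair (p1 C (ex C (ex C A))) (ev C (ex C A)))))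
           (\<lambda>A. lam C A (p2 C A))"
  using cartesian_closed_k_differential_category.monad[OF assms] .

end
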